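(* Let $n\geq 1$ and $m\geq 2$, and let $H_1$ and $H_2$ be the components of $R_t(T(2n+1,2m))$ containing $M_1=E_1\cup E_3\cup\cdots\cup E_{2m-1}$ and $M_2=E_2\cup E_4\cup\cdots\cup E_{2m}$ respectively. Then $H_1$ and $H_2$ are isomorphic.
   Context: $T(2n+1,2m)$ is the graph with vertices $(u_i,v_j)$, $i\in\mathbb{Z}_{2m}$, $j\in\mathbb{Z}_{2n+1}$, where $(u_i,v_j)$ is adjacent to $(u_{i+1},v_j)$ and $(u_i,v_{j+1})$, cellularly embedded in the torus with faces the $4$-cycles $(u_i,v_j)(u_{i+1},v_j)(u_{i+1},v_{j+1})(u_i,v_{j+1})$. For $1\le i\le 2m$, $E_i=\{(u_i,v_j)(u_{i+1},v_j):1\le j\le 2n+1\}$ (index mod $2m$). The total resonance graph $R_t(G)$ has the perfect matchings as vertices, two perfect matchings $M,M'$ being adjacent iff $M\oplus M'$ is exactly the boundary of one face. (These are distinct components, and they are the only two components.) *)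

theory Defs
  imports Main
begin

(* Vertex (u_i, v_j) of T(2n+1,2m) is encoded as the pair (i,j) with
   i < 2m (index in Z_{2m}) and j < 2n+1 (index in Z_{2n+1}).
   Edges are 2-element sets of vertices. *)

type_synonym tvert = "nat \<times> nat"

definition torus_verts :: "nat \<Rightarrow> nat \<Rightarrow> tvert set" where
  "torus_verts n m = {0..<2*m} \<times> {0..<2*n+1}"

definition uedge :: "nat \<Rightarrow> nat \<Rightarrow> nat \<Rightarrow> nat \<Rightarrow> tvert set" where
  "uedge n m i j = {(i,j), ((i+1) mod (2*m), j)}"

definition vedge :: "nat \<Rightarrow> nat \<Rightarrow> nat \<Rightarrow> nat \<Rightarrow> tvert set" where
  "vedge n m i j = {(i,j), (i, (j+1) mod (2*n+1))}"

definition torus_edges :: "nat \<Rightarrow> nat \<Rightarrow> tvert set set" where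
  "torus_edges n m =
     {uedge n m i j | i j. i < 2*m \<and> j < 2*n+1} \<union> {vedge n m i j | i j. i < 2*m \<and> j < 2*n+1}"

definition face :: "nat \<Rightarrow> nat \<Rightarrow> nat \<Rightarrow> nat \<Rightarrow> tvert set set" where
  "face n m i j = {uedge n m i j, vedge n m ((i+1) mod (2*m)) j,
                   uedge n m i ((j+1) mod (2*n+1)), vedge n m i j}"

definition torus_faces :: "nat \<Rightarrow> nat \<Rightarrow> tvert set set set" where
  "torus_faces n m = {face n m i j | i j. i < 2*m \<and> j < 2*n+1}"

definition perfect_matching :: "nat \<Rightarrow> nat \<Rightarrow> tvert set set \<Rightarrow> bool" where
  "perfect_matching n m M \<longleftrightarrow>
     M \<subseteq> torus_edges n m \<and> (\<forall>v \<in> torus_verts n m. \<exists>!e. e \<in> M \<and> v \<in> e)"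

definition symdiff :: "'a set \<Rightarrow> 'a set \<Rightarrow> 'a set" where
  "symdiff A B = (A - B) \<union> (B - A)"

definition tres_adj :: "nat \<Rightarrow> nat \<Rightarrow> tvert set set \<Rightarrow> tvert set set \<Rightarrow> bool" where
  "tres_adj n m M M' \<longleftrightarrow> perfect_matching n m M \<and> perfect_matching n m M' \<and>
     (\<exists>f \<in> torus_faces n m. symdiff M M' = f)"

definition tres_component :: "nat \<Rightarrow> nat \<Rightarrow> tvert set set \<Rightarrow> tvert set set set" where
  "tres_component n m M = {M'. (tres_adj n m)\<^sup>*\<^sup>* M M'}"

(* E_i = {(u_i,v_j)(u_{i+1},v_j) : j}, index i taken mod 2m (so E_{2m} = E_0) *)
definition Eset :: "nat \<Rightarrow> nat \<Rightarrow> nat \<Rightarrow> tvert set set" where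
  "Eset n m i = {uedge n m (i mod (2*m)) j | j. j < 2*n+1}"

definition M1 :: "nat \<Rightarrow> nat \<Rightarrow> tvert set set" where
  "M1 n m = (\<Union>k \<in> {1..m}. Eset n m (2*k - 1))"

definition M2 :: "nat \<Rightarrow> nat \<Rightarrow> tvert set set" where
  "M2 n m = (\<Union>k \<in> {1..m}. Eset n m (2*k))"

definition graph_iso :: "'a set \<Rightarrow> ('a \<Rightarrow> 'a \<Rightarrow> bool) \<Rightarrow> 'b set \<Rightarrow> ('b \<Rightarrow> 'b \<Rightarrow> bool) \<Rightarrow> bool" where
  "graph_iso V1 adj1 V2 adj2 \<longleftrightarrow>
     (\<exists>f. bij_betw f V1 V2 \<and> (\<forall>x \<in> V1. \<forall>y \<in> V1. adj1 x y \<longleftrightarrow> adj2 (f x) (f y)))"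

end

theory Submission
  imports Defs
begin

definition sg :: "nat \<Rightarrow> tvert \<Rightarrow> tvert" where
  "sg m v = ((fst v + 1) mod (2*m), snd v)"
definition tu :: "nat \<Rightarrow> tvert \<Rightarrow> tvert" where
  "tu m v = ((fst v + (2*m - 1)) mod (2*m), snd v)"

lemma ar1: "(a::nat) < 2*m \<Longrightarrow> ((a + 1) mod (2*m) + (2*m - 1)) mod (2*m) = a"
proof (cases "a + 1 < 2*m")
  case True
  then have "(a + 1) mod (2*m) + (2*m - 1) = a + 2*m" by simp
  then show ?thesis using True by simp
next
  case False
  assume "a < 2*m"
  with False have "a + 1 = 2*m" by simp
  then show ?thesis by simp
qed

lemma ar2: "(a::nat) < 2*m \<Longrightarrow> ((a + (2*m - 1)) mod (2*m) + 1) mod (2*m) = a"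
proof (cases a)
  case 0
  assume "a < 2*m"
  then have "(2*m - 1) mod (2*m) = 2*m - 1" by simp
  then show ?thesis using 0 \<open>a < 2*m\<close> by simp
next
  case (Suc b)
  assume "a < 2*m"
  then have "a + (2*m - 1) = b + 2*m" using Suc by simp
  then have "(a + (2*m - 1)) mod (2*m) = b" using Suc \<open>a < 2*m\<close> by simp
  then show ?thesis using Suc \<open>a < 2*m\<close> by simp
qed

lemma tu_sg: "v \<in> torus_verts n m \<Longrightarrow> tu m (sg m v) = v"
proof (cases v)
  case (Pair a b)
  assume "v \<in> torus_verts n m"
  then have "a < 2*m" using Pair by (simp add: torus_verts_def)
  have "tu m (sg m (a,b)) = (((a+1) mod (2*m) + (2*m-1)) mod (2*m), b)"
    by (simp only: tu_def sg_def fst_conv snd_conv)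
  then show ?thesis using Pair ar1[OF \<open>a < 2*m\<close>] by simp
qed

lemma sg_tu: "v \<in> torus_verts n m \<Longrightarrow> sg m (tu m v) = v"
proof (cases v)
  case (Pair a b)
  assume "v \<in> torus_verts n m"
  then have "a < 2*m" using Pair by (simp add: torus_verts_def)
  have "sg m (tu m (a,b)) = (((a + (2*m - 1)) mod (2*m) + 1) mod (2*m), b)"
    by (simp only: tu_def sg_def fst_conv snd_conv)
  then show ?thesis using Pair ar2[OF \<open>a < 2*m\<close>] by simp
qed

lemma sg_V: "v \<in> torus_verts n m \<Longrightarrow> sg m v \<in> torus_verts n m"
  by (cases v) (auto simp: sg_def torus_verts_def)
lemma tu_V: "v \<in> torus_verts n m \<Longrightarrow> tu m v \<in> torus_verts n m"
  by (cases v) (auto simp: tu_def torus_verts_def)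

lemma ar3: "((i::nat) + 1) mod (2*m) + 1 = (i + 1) mod (2*m) + 1" by simp

lemma sg_uedge: "sg m ` uedge n m i j = uedge n m ((i+1) mod (2*m)) j"
  by (auto simp: sg_def uedge_def mod_add_left_eq)
lemma sg_vedge: "sg m ` vedge n m i j = vedge n m ((i+1) mod (2*m)) j"
  by (auto simp: sg_def vedge_def)
lemma tu_uedge: "m \<ge> 1 \<Longrightarrow> tu m ` uedge n m i j = uedge n m ((i+(2*m-1)) mod (2*m)) j"
proof -
  assume m: "m \<ge> 1"
  have "((i + 1) mod (2 * m) + (2 * m - 1)) mod (2 * m) = ((i + (2 * m - 1)) mod (2 * m) + 1) mod (2 * m)"
  proof -
    have "((i + 1) mod (2 * m) + (2 * m - 1)) mod (2 * m) = (i + 1 + (2 * m - 1)) mod (2 * m)"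
      by (rule mod_add_left_eq)
    also have "\<dots> = (i + (2 * m - 1) + 1) mod (2 * m)" by (simp only: add_ac)
    also have "\<dots> = ((i + (2 * m - 1)) mod (2 * m) + 1) mod (2 * m)"
      by (rule mod_add_left_eq[symmetric])
    finally show ?thesis .
  qed
  then show ?thesis by (auto simp: tu_def uedge_def)
qed
lemma tu_vedge: "tu m ` vedge n m i j = vedge n m ((i+(2*m-1)) mod (2*m)) j"
  by (auto simp: tu_def vedge_def)

lemma mlt: "(i::nat) < 2*m \<Longrightarrow> x mod (2*m) < 2*m" by simp

lemma sg_E: "e \<in> torus_edges n m \<Longrightarrow> sg m ` e \<in> torus_edges n m"
proof -
  assume "e \<in> torus_edges n m"
  then obtain i j where ij: "i < 2*m" "j < 2*n+1" "e = uedge n m i j \<or> e = vedge n m i j"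
    unfolding torus_edges_def by blast
  have lt: "(i + 1) mod (2*m) < 2*m" using ij(1) by simp
  from ij(3) show ?thesis
  proof
    assume "e = uedge n m i j"
    then have "sg m ` e = uedge n m ((i + 1) mod (2*m)) j" using sg_uedge by simp
    then show ?thesis using lt ij(2) unfolding torus_edges_def by blast
  next
    assume "e = vedge n m i j"
    then have "sg m ` e = vedge n m ((i + 1) mod (2*m)) j" using sg_vedge by simp
    then show ?thesis using lt ij(2) unfolding torus_edges_def by blast
  qed
qed

lemma tu_E: "e \<in> torus_edges n m \<Longrightarrow> tu m ` e \<in> torus_edges n m"
proof -
  assume "e \<in> torus_edges n m"
  then obtain i j where ij: "i < 2*m" "j < 2*n+1" "e = uedge n m i j \<or> e = vedge n m i j"
    unfolding torus_edges_def by blast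
  then have m: "m \<ge> 1" by simp
  have lt: "(i + (2*m-1)) mod (2*m) < 2*m" using m by simp
  from ij(3) show ?thesis
  proof
    assume "e = uedge n m i j"
    then have "tu m ` e = uedge n m ((i + (2*m-1)) mod (2*m)) j" using tu_uedge[OF m] by simp
    then show ?thesis using lt ij(2) unfolding torus_edges_def by blast
  next
    assume "e = vedge n m i j"
    then have "tu m ` e = vedge n m ((i + (2*m-1)) mod (2*m)) j" using tu_vedge by simp
    then show ?thesis using lt ij(2) unfolding torus_edges_def by blast
  qed
qed

lemma E_V: "e \<in> torus_edges n m \<Longrightarrow> e \<subseteq> torus_verts n m"
proof -
  have m: "\<And>x. m > 0 \<Longrightarrow> x mod (2*m) < 2*m" by simp
  have n: "\<And>x. x mod (2*n+1) < 2*n+1" by simp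
  assume "e \<in> torus_edges n m"
  then obtain i j where ij: "i < 2*m" "j < 2*n+1" "e = uedge n m i j \<or> e = vedge n m i j"
    unfolding torus_edges_def by blast
  then have "m > 0" by simp
  then show ?thesis using ij m n unfolding torus_verts_def uedge_def vedge_def by auto
qed

lemma sg_face: "i < 2*m \<Longrightarrow> (`) (sg m) ` face n m i j = face n m ((i+1) mod (2*m)) j"
  by (simp add: face_def sg_uedge sg_vedge)

lemma tu_face: "i < 2*m \<Longrightarrow> (`) (tu m) ` face n m i j = face n m ((i+(2*m-1)) mod (2*m)) j"
proof -
  assume i: "i < 2*m"
  then have m: "m \<ge> 1" by simp
  have e: "((i+1) mod (2*m) + (2*m-1)) mod (2*m) = ((i + (2*m-1)) mod (2*m) + 1) mod (2*m)"
    using ar1[OF i] ar2[OF i] by simp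
  show ?thesis unfolding face_def
    by (simp only: image_insert image_empty tu_uedge[OF m] tu_vedge e)
qed

lemma sg_F: "f \<in> torus_faces n m \<Longrightarrow> (`) (sg m) ` f \<in> torus_faces n m"
  unfolding torus_faces_def
  apply (elim CollectE exE conjE)
  apply (simp add: sg_face)
  apply (blast intro: mlt)
  done

lemma tu_F: "f \<in> torus_faces n m \<Longrightarrow> (`) (tu m) ` f \<in> torus_faces n m"
  unfolding torus_faces_def
  apply (elim CollectE exE conjE)
  apply (simp add: tu_face)
  apply (blast intro: mlt)
  done


lemma uniq: "\<exists>!x. P x \<Longrightarrow> P a \<Longrightarrow> P b \<Longrightarrow> a = b" by blast

lemma pm_map:
  assumes inv: "\<And>v. v \<in> torus_verts n m \<Longrightarrow> q v \<in> torus_verts n m \<and> p (q v) = v \<and> q (p v) = v"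
    and pe: "\<And>e. e \<in> torus_edges n m \<Longrightarrow> p ` e \<in> torus_edges n m"
    and pm: "perfect_matching n m M"
  shows "perfect_matching n m ((`) p ` M)"
  unfolding perfect_matching_def
proof (intro conjI ballI)
  have ME: "M \<subseteq> torus_edges n m" using pm unfolding perfect_matching_def by (rule conjunct1)
  have u0: "\<forall>v \<in> torus_verts n m. \<exists>!e. e \<in> M \<and> v \<in> e"
    using pm unfolding perfect_matching_def by (rule conjunct2)
  have u: "\<exists>!e. e \<in> M \<and> v \<in> e" if "v \<in> torus_verts n m" for v
    using u0 that by (rule bspec)
  show "(`) p ` M \<subseteq> torus_edges n m"
  proof
    fix x assume "x \<in> (`) p ` M"
    then obtain e where "e \<in> M" "x = p ` e" by blast
    then show "x \<in> torus_edges n m" using ME pe by blast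
  qed
  fix v assume v: "v \<in> torus_verts n m"
  have qv: "q v \<in> torus_verts n m" "p (q v) = v" using inv[OF v] by auto
  obtain e where e: "e \<in> M" "q v \<in> e" using u[OF qv(1)] by blast
  have ex1: "p ` e \<in> (`) p ` M" using e(1) by (rule imageI)
  have "p (q v) \<in> p ` e" using e(2) by (rule imageI)
  then have ex2: "v \<in> p ` e" using qv(2) by simp
  have un: "e1 = p ` e" if h: "e1 \<in> (`) p ` M" "v \<in> e1" for e1
  proof -
    obtain e1' where e1': "e1' \<in> M" "e1 = p ` e1'" using h(1) by blast
    then obtain w where w: "w \<in> e1'" "v = p w" using h(2) by blast
    have "e1' \<in> torus_edges n m" using ME e1'(1) by blast
    then have "w \<in> torus_verts n m" using E_V w(1) by blast
    then have "q (p w) = w" using inv by blast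
    then have "q v = w" using w(2) by simp
    then have qe1: "q v \<in> e1'" using w(1) by simp
    have "e1' = e" using uniq[OF u[OF qv(1)] conjI[OF e1'(1) qe1] conjI[OF e(1) e(2)]] by simp
    then show ?thesis using e1' by simp
  qed
  show "\<exists>!e. e \<in> (`) p ` M \<and> v \<in> e"
  proof (rule ex1I[of _ "p ` e"])
    show "p ` e \<in> (`) p ` M \<and> v \<in> p ` e" using ex1 ex2 by (rule conjI)
  next
    fix y assume y: "y \<in> (`) p ` M \<and> v \<in> y"
    show "y = p ` e" by (rule un[OF conjunct1[OF y] conjunct2[OF y]])
  qed
qed

lemma edge_inv:
  assumes inv: "\<And>v. v \<in> torus_verts n m \<Longrightarrow> q (p v) = v"
  shows "e \<in> torus_edges n m \<Longrightarrow> q ` (p ` e) = e"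
proof -
  assume "e \<in> torus_edges n m"
  then have "e \<subseteq> torus_verts n m" by (rule E_V)
  then show ?thesis using inv by (force simp: image_image)
qed

lemma map_inv:
  assumes inv: "\<And>v. v \<in> torus_verts n m \<Longrightarrow> q (p v) = v"
    and ME: "M \<subseteq> torus_edges n m"
  shows "(`) q ` ((`) p ` M) = M"
proof -
  have "\<And>e. e \<in> M \<Longrightarrow> q ` (p ` e) = e" using edge_inv[where q=q and p=p and n=n and m=m, OF inv] ME by blast
  then show ?thesis by (force simp: image_image)
qed

lemma symdiff_map:
  assumes inv: "\<And>v. v \<in> torus_verts n m \<Longrightarrow> q (p v) = v"
    and ME: "M \<subseteq> torus_edges n m" and ME': "M' \<subseteq> torus_edges n m"
  shows "(`) p ` symdiff M M' = symdiff ((`) p ` M) ((`) p ` M')"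
proof -
  have inj: "inj_on ((`) p) (torus_edges n m)"
    by (rule inj_on_inverseI[where g="(`) q"]) (rule edge_inv[where q=q and p=p and n=n and m=m, OF inv])
  have i1: "(`) p ` (M - M') = (`) p ` M - (`) p ` M'"
    by (rule inj_on_image_set_diff[OF inj]) (use ME ME' in auto)
  have i2: "(`) p ` (M' - M) = (`) p ` M' - (`) p ` M"
    by (rule inj_on_image_set_diff[OF inj]) (use ME ME' in auto)
  show ?thesis unfolding symdiff_def image_Un i1 i2 ..
qed

lemma adj_map:
  assumes inv: "\<And>v. v \<in> torus_verts n m \<Longrightarrow> q v \<in> torus_verts n m \<and> p (q v) = v \<and> q (p v) = v"
    and pe: "\<And>e. e \<in> torus_edges n m \<Longrightarrow> p ` e \<in> torus_edges n m"
    and pf: "\<And>f. f \<in> torus_faces n m \<Longrightarrow> (`) p ` f \<in> torus_faces n m"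
    and adj: "tres_adj n m M M'"
  shows "tres_adj n m ((`) p ` M) ((`) p ` M')"
proof -
  have pm: "perfect_matching n m M" "perfect_matching n m M'" using adj by (auto simp: tres_adj_def)
  obtain f where f: "f \<in> torus_faces n m" "symdiff M M' = f" using adj by (auto simp: tres_adj_def)
  have E: "M \<subseteq> torus_edges n m" "M' \<subseteq> torus_edges n m" using pm by (auto simp: perfect_matching_def)
  have "symdiff ((`) p ` M) ((`) p ` M') = (`) p ` f"
    using symdiff_map[of n m q p, OF _ E] inv f(2) by simp
  then show ?thesis unfolding tres_adj_def
    using pm_map[OF inv pe pm(1)] pm_map[OF inv pe pm(2)] pf[OF f(1)] by blast
qed

definition FF where "FF m M = (`) (sg m) ` M"
definition GG where "GG m M = (`) (tu m) ` M"

lemma inv_sg: "v \<in> torus_verts n m \<Longrightarrow> tu m v \<in> torus_verts n m \<and> sg m (tu m v) = v \<and> tu m (sg m v) = v"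
  using tu_V sg_tu tu_sg by blast
lemma inv_tu: "v \<in> torus_verts n m \<Longrightarrow> sg m v \<in> torus_verts n m \<and> tu m (sg m v) = v \<and> sg m (tu m v) = v"
  using sg_V sg_tu tu_sg by blast

lemma adj_FF: "tres_adj n m M M' \<Longrightarrow> tres_adj n m (FF m M) (FF m M')"
  unfolding FF_def by (rule adj_map[OF inv_sg sg_E sg_F])
lemma adj_GG: "tres_adj n m M M' \<Longrightarrow> tres_adj n m (GG m M) (GG m M')"
  unfolding GG_def by (rule adj_map[OF inv_tu tu_E tu_F])

lemma GF: assumes "M \<subseteq> torus_edges n m" shows "GG m (FF m M) = M"
  unfolding GG_def FF_def using tu_sg[of _ n m] assms by (rule map_inv)
lemma FG: assumes "M \<subseteq> torus_edges n m" shows "FF m (GG m M) = M"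
  unfolding GG_def FF_def using sg_tu[of _ n m] assms by (rule map_inv)

lemma Eset_img: "Eset n m k = (\<lambda>j. uedge n m (k mod (2*m)) j) ` {..<2*n+1}"
  unfolding Eset_def by auto

lemma FF_Eset: "FF m (Eset n m i) = Eset n m (i+1)"
proof -
  have "FF m (Eset n m i) = (\<lambda>j. sg m ` uedge n m (i mod (2*m)) j) ` {..<2*n+1}"
    unfolding FF_def Eset_img image_image ..
  also have "\<dots> = (\<lambda>j. uedge n m ((i+1) mod (2*m)) j) ` {..<2*n+1}"
    by (simp only: sg_uedge mod_add_left_eq)
  also have "\<dots> = Eset n m (i+1)" unfolding Eset_img ..
  finally show ?thesis .
qed

lemma Eset_E: "m \<ge> 1 \<Longrightarrow> Eset n m k \<subseteq> torus_edges n m"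
proof
  fix x assume m: "m \<ge> 1" and "x \<in> Eset n m k"
  then obtain j where j: "j < 2*n+1" "x = uedge n m (k mod (2*m)) j" unfolding Eset_img by auto
  have "k mod (2*m) < 2*m" using m by simp
  then show "x \<in> torus_edges n m" using j unfolding torus_edges_def by blast
qed

lemma FF_M1: "FF m (M1 n m) = M2 n m"
proof -
  have "FF m (M1 n m) = (\<Union>k \<in> {1..m}. FF m (Eset n m (2*k - 1)))"
    unfolding FF_def M1_def by auto
  also have "\<dots> = (\<Union>k \<in> {1..m}. Eset n m (2*k))"
    by (rule SUP_cong) (auto simp: FF_Eset)
  finally show ?thesis unfolding M2_def .
qed

lemma M1_E: "M1 n m \<subseteq> torus_edges n m"
  unfolding M1_def
proof (rule UN_least)
  fix k assume "k \<in> {1..m}"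
  then have "m \<ge> 1" by simp
  then show "Eset n m (2*k - 1) \<subseteq> torus_edges n m" by (rule Eset_E)
qed

lemma comp_E:
  assumes "M0 \<subseteq> torus_edges n m" "M \<in> tres_component n m M0"
  shows "M \<subseteq> torus_edges n m"
proof -
  have "(tres_adj n m)\<^sup>*\<^sup>* M0 M" using assms(2) by (simp add: tres_component_def)
  then show ?thesis
    by (induction rule: rtranclp_induct) (use assms(1) in \<open>auto simp: tres_adj_def perfect_matching_def\<close>)
qed

lemma comp_FF: "M \<in> tres_component n m M0 \<Longrightarrow> FF m M \<in> tres_component n m (FF m M0)"
  unfolding tres_component_def
  by (simp, induction rule: rtranclp_induct) (auto intro: rtranclp.rtrancl_into_rtrancl adj_FF)
lemma comp_GG: "M \<in> tres_component n m M0 \<Longrightarrow> GG m M \<in> tres_component n m (GG m M0)"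
  unfolding tres_component_def
  by (simp, induction rule: rtranclp_induct) (auto intro: rtranclp.rtrancl_into_rtrancl adj_GG)

theorem theorem4p4:
  fixes n m :: nat
  assumes "n \<ge> 1" and "m \<ge> 2"
  shows "graph_iso (tres_component n m (M1 n m)) (tres_adj n m)
                   (tres_component n m (M2 n m)) (tres_adj n m)"
proof -
  let ?C1 = "tres_component n m (M1 n m)" and ?C2 = "tres_component n m (M2 n m)"
  have M2E: "M2 n m \<subseteq> torus_edges n m"
    by (metis FF_M1 M1_E FF_def image_subsetI sg_E subsetD)
  have GM2: "GG m (M2 n m) = M1 n m" using GF[OF M1_E] FF_M1 by metis
  have C1E: "\<And>x. x \<in> ?C1 \<Longrightarrow> x \<subseteq> torus_edges n m" using comp_E[OF M1_E] by blast
  have C2E: "\<And>x. x \<in> ?C2 \<Longrightarrow> x \<subseteq> torus_edges n m" using comp_E[OF M2E] by blast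
  have bij: "bij_betw (FF m) ?C1 ?C2"
  proof (rule bij_betw_byWitness[where f'="GG m"])
    show "\<forall>a\<in>?C1. GG m (FF m a) = a" using C1E GF by blast
    show "\<forall>a\<in>?C2. FF m (GG m a) = a" using C2E FG by blast
    show "FF m ` ?C1 \<subseteq> ?C2" using comp_FF FF_M1 by (metis image_subsetI)
    show "GG m ` ?C2 \<subseteq> ?C1" using comp_GG GM2 by (metis image_subsetI)
  qed
  have adj: "tres_adj n m x y \<longleftrightarrow> tres_adj n m (FF m x) (FF m y)" if "x \<in> ?C1" "y \<in> ?C1" for x y
  proof
    assume "tres_adj n m (FF m x) (FF m y)"
    then have "tres_adj n m (GG m (FF m x)) (GG m (FF m y))" by (rule adj_GG)
    then show "tres_adj n m x y" using GF C1E that by metis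
  qed (rule adj_FF)
  show ?thesis unfolding graph_iso_def using bij adj by blast
qed

end
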